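(* Let $Q$ be a nonempty subset of a normed linear space $(U,\|\cdot\|)$. Let $r>0$ and let $\{\beta_n\}_n$ be a sequence of positive real numbers with $\lim_{n\to\infty}\beta_n=1$. Suppose $T:Q\to Q$ satisfies: for all $p,q\in Q$ with $\|p-q\|<r$, $\|T^np-T^nq\|\leq\beta_n\|p-q\|$ for every $n\in\mathbb{N}$. Let $\{q_n\}_n$ be a sequence in $Q$ such that $\|Tq_n-q_n\|\to 0$ as $n\to\infty$. Then for each $m\in\mathbb{N}$, $\|T^mq_n-q_n\|\to 0$ as $n\to\infty$. *)

theory Defs
  imports "HOL-Analysis.Analysis"
begin

end

theory Submission
  imports Defs
begin

theorem mainTheorem3:
  fixes Q :: "'a::real_normed_vector set" and T :: "'a \<Rightarrow> 'a"
    and r :: real and \<beta> :: "nat \<Rightarrow> real" and q :: "nat \<Rightarrow> 'a"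
  assumes "Q \<noteq> {}"
    and "r > 0"
    and "\<And>n. \<beta> n > 0"
    and "\<beta> \<longlonglongrightarrow> 1"
    and "T ` Q \<subseteq> Q"
    and "\<And>p p' n. p \<in> Q \<Longrightarrow> p' \<in> Q \<Longrightarrow> norm (p - p') < r \<Longrightarrow> n \<ge> 1 \<Longrightarrow>
           norm ((T ^^ n) p - (T ^^ n) p') \<le> \<beta> n * norm (p - p')"
    and "\<And>n. q n \<in> Q"
    and "(\<lambda>n. norm (T (q n) - q n)) \<longlonglongrightarrow> 0"
  shows "\<forall>m. (\<lambda>n. norm ((T ^^ m) (q n) - q n)) \<longlonglongrightarrow> 0"
proof
  have step: "(\<lambda>n. norm ((T ^^ m) (T (q n)) - (T ^^ m) (q n))) \<longlonglongrightarrow> 0" for m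
  proof (cases "m = 0")
    case True
    then show ?thesis using assms(8) by simp
  next
    case False
    have ev: "eventually (\<lambda>n. norm (T (q n) - q n) < r) sequentially"
      using order_tendstoD(2)[OF assms(8) assms(2)] .
    have g: "(\<lambda>n. \<beta> m * norm (T (q n) - q n)) \<longlonglongrightarrow> 0"
      using tendsto_mult_right_zero[OF assms(8)] by simp
    show ?thesis
    proof (rule Lim_null_comparison[OF _ g])
      show "eventually (\<lambda>n. norm (norm ((T ^^ m) (T (q n)) - (T ^^ m) (q n))) \<le> \<beta> m * norm (T (q n) - q n)) sequentially"
        using ev
      proof eventually_elim
        case (elim n)
        have "T (q n) \<in> Q" using assms(5,7) by blast
        then show ?case using assms(6)[OF _ assms(7) elim, of m] False by simp
      qed
    qed
  qed
  fix m
  show "(\<lambda>n. norm ((T ^^ m) (q n) - q n)) \<longlonglongrightarrow> 0"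
  proof (induction m)
    case 0
    then show ?case by simp
  next
    case (Suc m)
    have eq: "(T ^^ Suc m) x = (T ^^ m) (T x)" for x
      by (simp only: funpow_Suc_right comp_def)
    have s: "(\<lambda>n. norm ((T ^^ m) (T (q n)) - (T ^^ m) (q n)) + norm ((T ^^ m) (q n) - q n)) \<longlonglongrightarrow> 0"
      using tendsto_add[OF step Suc.IH] by simp
    show ?case
    proof (rule Lim_null_comparison[OF _ s])
      show "eventually (\<lambda>n. norm (norm ((T ^^ Suc m) (q n) - q n)) \<le> norm ((T ^^ m) (T (q n)) - (T ^^ m) (q n)) + norm ((T ^^ m) (q n) - q n)) sequentially"
        unfolding eq by (auto intro!: always_eventually norm_diff_triangle_le)
    qed
  qed
qed

end
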